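(* Let $q$ be a prime power and $d\le n\le m$ integers, let $\tau=\lfloor (d-1)/2\rfloor+1$, and assume $d\le n-1$ when $d$ is odd. Then there exist a code $\mathcal C\subseteq\mathbb F_{q^m}^n$ with minimum rank distance at least $d$ and a word $\mathbf r\in\mathbb F_{q^m}^n$ such that $|\mathcal C\cap\mathcal B_\tau(\mathbf r)|\ge q^{n-\tau}$.
   Context: Fixing a basis of $\mathbb F_{q^m}$ over $\mathbb F_q$, each vector in $\mathbb F_{q^m}^n$ is identified with an $m\times n$ matrix over $\mathbb F_q$; $\mathrm{rk}$ denotes its rank. The minimum rank distance of $\mathcal C$ is $\min\{\mathrm{rk}(\mathbf c_1-\mathbf c_2):\mathbf c_1\ne\mathbf c_2\in\mathcal C\}$, and $\mathcal B_\tau(\mathbf r)=\{\mathbf x:\mathrm{rk}(\mathbf x-\mathbf r)\le\tau\}$. Codes need not be linear. *)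

theory Defs
  imports "Jordan_Normal_Form.DL_Rank"
begin

text \<open>Words of F_{q^m}^n are identified (via a fixed F_q-basis of F_{q^m}) with
  m x n matrices over F_q, i.e. elements of carrier_mat m n.\<close>

definition mat_rk :: "'a::field mat \<Rightarrow> nat" where
  "mat_rk A = vec_space.rank (dim_row A) A"

definition min_rank_dist_ge :: "'a::field mat set \<Rightarrow> nat \<Rightarrow> bool" where
  "min_rank_dist_ge C d \<longleftrightarrow> (\<forall>c1\<in>C. \<forall>c2\<in>C. c1 \<noteq> c2 \<longrightarrow> d \<le> mat_rk (c1 - c2))"

definition rank_ball :: "nat \<Rightarrow> nat \<Rightarrow> nat \<Rightarrow> 'a::field mat \<Rightarrow> 'a mat set" where
  "rank_ball m n \<tau> r = {x \<in> carrier_mat m n. mat_rk (x - r) \<le> \<tau>}"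

end

theory Submission
  imports Defs "HOL-Algebra.Algebraic_Closure_Type"
begin

lemma ff_char_prime: "Factorial_Ring.prime CHAR('a::{finite,field})"
  using prime_CHAR_semidom[where ?'a='a] finite_imp_CHAR_pos[where ?'a='a] by auto

lemma ff_card_ge2: "card (UNIV::'a::{finite,field} set) \<ge> 2"
proof -
  have "{0::'a, 1} \<subseteq> UNIV" by auto
  hence "card {0::'a,1} \<le> card (UNIV :: 'a set)" by (intro card_mono) auto
  thus ?thesis by simp
qed

lemma ff_fermat:
  fixes x :: "'a :: {finite,field}"
  shows   "x ^ card (UNIV :: 'a set) = x"
proof (cases "x = 0")
  case False
  have "x * (\<Prod>y\<in>UNIV-{0}. x * y) = x * x ^ (card (UNIV :: 'a set) - 1) * \<Prod>(UNIV-{0})"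
    by (simp add: prod.distrib mult_ac)
  also have "x * x ^ (card (UNIV :: 'a set) - 1) = x ^ Suc (card (UNIV :: 'a set) - 1)"
    by (subst power_Suc) auto
  also have "Suc (card (UNIV :: 'a set) - 1) = card (UNIV :: 'a set)"
    using finite_UNIV_card_ge_0[where ?'a = 'a] by simp
  also have "(\<Prod>y\<in>UNIV-{0}. x * y) = (\<Prod>y\<in>UNIV-{0}. y)"
    by (rule prod.reindex_bij_witness[of _ "\<lambda>y. y / x" "\<lambda>y. x * y"]) (use False in auto)
  finally show ?thesis
    by simp
qed (use finite_UNIV_card_ge_0[where ?'a = 'a] in auto)

lemma ff_inv_of_nat:
  assumes "of_nat c \<noteq> (0::'a::{finite,field})"
  shows "of_nat (c ^ (card (UNIV :: 'a set) - 2)) * (of_nat c :: 'a) = 1"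
proof -
  have q: "card (UNIV :: 'a set) = Suc (Suc (card (UNIV :: 'a set) - 2))" using ff_card_ge2[where 'a='a] by simp
  have "(of_nat c::'a) ^ card (UNIV :: 'a set) = of_nat c" by (rule ff_fermat)
  hence "(of_nat c::'a) * ((of_nat c) ^ (card (UNIV :: 'a set) - 2) * of_nat c) = of_nat c * 1"
    by (subst (asm) q) (simp add: algebra_simps)
  hence "(of_nat c::'a) ^ (card (UNIV :: 'a set) - 2) * of_nat c = 1" using assms by simp
  thus ?thesis by (simp add: of_nat_power)
qed

definition addcl :: "'a::{finite,field} set \<Rightarrow> bool" where
  "addcl S \<longleftrightarrow> 0 \<in> S \<and> (\<forall>a\<in>S. \<forall>b\<in>S. a + b \<in> S)"

lemma addcl_nat_mult: "addcl S \<Longrightarrow> y \<in> S \<Longrightarrow> of_nat i * y \<in> S"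
  by (induction i) (auto simp: addcl_def distrib_right)

lemma addcl_uminus: assumes "addcl S" "y \<in> S" shows "-y \<in> (S::'a::{finite,field} set)"
proof -
  let ?p = "CHAR('a)"
  have p1: "?p \<ge> 1" using ff_char_prime[where 'a='a] prime_ge_1_nat by blast
  have "of_nat (?p - 1) * y + y = of_nat ?p * y"
    using p1 by (metis (no_types, lifting) Suc_diff_1 less_le_trans less_numeral_extra(1) mult.commute mult_Suc_right of_nat_Suc ring_class.ring_distribs(1) add.commute mult.right_neutral p1 )
  hence "of_nat (?p - 1) * y = - y" by (simp add: eq_neg_iff_add_eq_0)
  thus ?thesis using addcl_nat_mult[OF assms] by metis
qed

lemma addcl_diff: "addcl S \<Longrightarrow> a \<in> S \<Longrightarrow> b \<in> S \<Longrightarrow> a - b \<in> (S::'a::{finite,field} set)"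
  using addcl_uminus[of S b] by (auto simp: addcl_def simp flip: diff_conv_add_uminus)

lemma ff_card_char_power: "\<exists>e. card (UNIV :: 'a::{finite,field} set) = CHAR('a) ^ e"
proof -
  let ?p = "CHAR('a)"
  have pp: "Factorial_Ring.prime ?p" by (rule ff_char_prime)
  have p2: "?p \<ge> 2" using pp prime_ge_2_nat by blast
  have main: "addcl S \<Longrightarrow> card S = ?p ^ e \<Longrightarrow> \<exists>e. card (UNIV :: 'a set) = ?p ^ e" for S :: "'a set" and e
  proof (induction "card (UNIV :: 'a set) - card S" arbitrary: S e rule: less_induct)
    case (less S e)
    show ?case
    proof (cases "S = UNIV")
      case True thus ?thesis using less by metis
    next
      case False
      then obtain x where x: "x \<notin> S" by auto
      define f where "f = (\<lambda>(s,i). s + of_nat i * x)"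
      define S' where "S' = f ` (S \<times> {..<?p})"
      have inj: "inj_on f (S \<times> {..<?p})"
      proof (rule inj_onI, clarsimp simp: f_def)
        fix s i s' j assume s: "s \<in> S" "s' \<in> S" "i < ?p" "j < ?p" and eq: "s + of_nat i * x = s' + of_nat j * x"
        have ij: "i = j"
        proof (rule ccontr)
          assume ne: "i \<noteq> j"
          have gen: "\<And>i j s s'. s \<in> S \<Longrightarrow> s' \<in> S \<Longrightarrow> i < j \<Longrightarrow> j < ?p \<Longrightarrow> s + of_nat i * x = s' + of_nat j * x \<Longrightarrow> False"
          proof -
            fix i j s s' assume h: "s \<in> S" "s' \<in> S" "i < j" "j < ?p" "s + of_nat i * (x::'a) = s' + of_nat j * x"
            define c where "c = j - i"
            have "of_nat c * x = s - s'" using h(3,5) unfolding c_def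
              by (simp add: of_nat_diff algebra_simps)
            hence cS: "of_nat c * x \<in> S" using addcl_diff[OF less.prems(1) h(1,2)] by simp
            have "of_nat c \<noteq> (0::'a)"
            proof
              assume "of_nat c = (0::'a)"
              hence "?p dvd c" using of_nat_eq_0_iff_char_dvd by blast
              moreover have "0 < c" "c < ?p" using h(3,4) unfolding c_def by auto
              ultimately show False by (simp add: nat_dvd_not_less)
            qed
            hence "of_nat (c ^ (card (UNIV :: 'a set) - 2)) * (of_nat c * x) = x"
              using ff_inv_of_nat[of c] by (metis mult.assoc mult_1)
            hence "x \<in> S" using addcl_nat_mult[OF less.prems(1) cS] by metis
            thus False using x by simp
          qed
          show False
          proof (cases "i < j")
            case True show False using gen[OF s(1,2) True s(4) eq] .
          next
            case False hence "j < i" using ne by simp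
            thus False using gen[OF s(2,1) \<open>j < i\<close> s(3)] eq by simp
          qed
        qed
        show "s = s' \<and> i = j" using ij eq by simp
      qed
      have cardS': "card S' = ?p ^ Suc e"
        unfolding S'_def using card_image[OF inj] less.prems(2)
        by (simp add: card_cartesian_product)
      have addS': "addcl S'"
        unfolding addcl_def
      proof (intro conjI ballI)
        have "f (0,0) \<in> S'" unfolding S'_def using less.prems(1) p2 by (auto simp: addcl_def)
        thus "0 \<in> S'" by (simp add: f_def)
      next
        fix a b assume "a \<in> S'" "b \<in> S'"
        then obtain s i s' j where a: "s \<in> S" "i < ?p" "a = s + of_nat i * x"
          and b: "s' \<in> S" "j < ?p" "b = s' + of_nat j * x"
          unfolding S'_def f_def by auto
        have "of_nat (i + j) = (of_nat ((i + j) mod ?p + ?p * ((i + j) div ?p)) :: 'a)"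
          by (simp only: mod_mult_div_eq)
        also have "\<dots> = of_nat ((i + j) mod ?p)" by (simp only: of_nat_add of_nat_mult of_nat_CHAR mult_zero_left add_0_right)
        finally have "of_nat (i + j) = (of_nat ((i + j) mod ?p) :: 'a)" .
        hence "a + b = (s + s') + of_nat ((i + j) mod ?p) * x"
          using a b by (metis (no_types, lifting) add.assoc add.left_commute distrib_right of_nat_add)
        moreover have "s + s' \<in> S" using less.prems(1) a(1) b(1) by (auto simp: addcl_def)
        moreover have "(i + j) mod ?p < ?p" using p2 by simp
        ultimately show "a + b \<in> S'" unfolding S'_def f_def by force
      qed
      have "S \<subseteq> S'"
      proof
        fix s assume "s \<in> S"
        hence "f (s,0) \<in> S'" unfolding S'_def using p2 by auto
        thus "s \<in> S'" by (simp add: f_def)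
      qed
      moreover have "x \<in> S'"
      proof -
        have "f (0,1) \<in> S'" unfolding S'_def using p2 less.prems(1) by (auto simp: addcl_def)
        thus "x \<in> S'" by (simp add: f_def)
      qed
      ultimately have "S \<subset> S'" using x by auto
      hence "card S < card S'" by (simp add: psubset_card_mono)
      moreover have "card S' \<le> card (UNIV :: 'a set)" by (simp add: card_mono)
      ultimately have "card (UNIV :: 'a set) - card S' < card (UNIV :: 'a set) - card S" by simp
      thus ?thesis using less.hyps addS' cardS' by blast
    qed
  qed
  show ?thesis by (rule main[of "{0}" 0]) (auto simp: addcl_def)
qed

definition evf :: "nat \<Rightarrow> 'a::{finite,field} alg_closure \<Rightarrow> (nat \<Rightarrow> 'a) \<Rightarrow> 'a alg_closure" where
  "evf d t c = (\<Sum>i<d. to_ac (c i) * t ^ i)"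

definition spn :: "nat \<Rightarrow> 'a::{finite,field} alg_closure \<Rightarrow> 'a alg_closure set" where
  "spn d t = range (evf d t)"

lemma evf_cong: "(\<And>i. i < d \<Longrightarrow> c i = c' i) \<Longrightarrow> evf d t c = evf d t c'"
  unfolding evf_def by (intro sum.cong) auto

lemma evf_add: "evf d t c + evf d t c' = evf d t (\<lambda>i. c i + c' i)"
  unfolding evf_def by (simp add: sum.distrib distrib_right)

lemma evf_diff: "evf d t c - evf d t c' = evf d t (\<lambda>i. c i - c' i)"
  unfolding evf_def by (simp add: sum_subtractf left_diff_distrib)

lemma evf_smult: "to_ac a * evf d t c = evf d t (\<lambda>i. a * c i)"
  unfolding evf_def by (simp add: sum_distrib_left mult.assoc)

lemma evf_Suc: "evf (Suc d) t c = evf d t c + to_ac (c d) * t ^ d"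
  unfolding evf_def by simp

lemma evf_unit: "j < d \<Longrightarrow> evf d t (\<lambda>i. if i = j then 1 else 0) = t ^ j"
proof -
  assume j: "j < d"
  have "evf d t (\<lambda>i. if i = j then 1 else 0) = (\<Sum>i<d. if i = j then t ^ i else 0)"
    unfolding evf_def by (rule sum.cong) auto
  also have "\<dots> = t ^ j" using j by (simp add: sum.delta)
  finally show ?thesis .
qed

lemma spn_add: "z \<in> spn d t \<Longrightarrow> w \<in> spn d t \<Longrightarrow> z + w \<in> spn d t"
  unfolding spn_def by (auto simp: evf_add)

lemma spn_diff: "z \<in> spn d t \<Longrightarrow> w \<in> spn d t \<Longrightarrow> z - w \<in> spn d t"
  unfolding spn_def by (auto simp: evf_diff)

lemma spn_smult: "z \<in> spn d t \<Longrightarrow> to_ac a * z \<in> spn d t"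
  unfolding spn_def by (auto simp: evf_smult)

lemma spn_zero: "0 \<in> spn d t"
  using spn_diff[of "evf d t (\<lambda>_. 0)" d t "evf d t (\<lambda>_. 0)"] unfolding spn_def by auto

lemma spn_sum: "finite A \<Longrightarrow> (\<And>x. x \<in> A \<Longrightarrow> f x \<in> spn d t) \<Longrightarrow> sum f A \<in> spn d t"
  by (induction A rule: finite_induct) (auto intro: spn_add spn_zero)

lemma spn_pow: "j < d \<Longrightarrow> t ^ j \<in> spn d t"
  using evf_unit[of j d t] unfolding spn_def by (metis rangeI)

lemma spn_mult_t:
  assumes td: "t ^ d \<in> spn d t" and z: "z \<in> spn d t"
  shows "t * z \<in> spn d t"
proof -
  obtain c where c: "z = evf d t c" using z unfolding spn_def by auto
  have "t * z = (\<Sum>i<d. to_ac (c i) * t ^ Suc i)"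
    unfolding c evf_def by (simp add: sum_distrib_left mult_ac)
  also have "\<dots> \<in> spn d t"
  proof (intro spn_sum)
    fix i assume i: "i \<in> {..<d}"
    show "to_ac (c i) * t ^ Suc i \<in> spn d t"
    proof (cases "Suc i < d")
      case True thus ?thesis by (intro spn_smult spn_pow)
    next
      case False hence "Suc i = d" using i by auto
      thus ?thesis using td spn_smult by metis
    qed
  qed auto
  finally show ?thesis .
qed

lemma spn_mult_tpow:
  assumes td: "t ^ d \<in> spn d t" and z: "z \<in> spn d t"
  shows "t ^ j * z \<in> spn d t"
  by (induction j) (use z spn_mult_t[OF td] in \<open>auto simp: mult.assoc\<close>)

lemma spn_mult:
  assumes td: "t ^ d \<in> spn d t" and z: "z \<in> spn d t" and w: "w \<in> spn d t"
  shows "z * w \<in> spn d t"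
proof -
  obtain c where c: "w = evf d t c" using w unfolding spn_def by auto
  have "z * w = (\<Sum>i<d. to_ac (c i) * (t ^ i * z))"
    unfolding c evf_def by (simp add: sum_distrib_left mult_ac)
  also have "\<dots> \<in> spn d t"
    by (intro spn_sum spn_smult spn_mult_tpow[OF td z]) auto
  finally show ?thesis .
qed

lemma evf_indep:
  assumes least: "\<And>j. j < d \<Longrightarrow> t ^ j \<notin> spn j t"
    and z: "evf d t c = 0"
  shows "\<forall>i<d. c i = 0"
proof (rule ccontr)
  assume "\<not> (\<forall>i<d. c i = 0)"
  define j where "j = (GREATEST i. i < d \<and> c i \<noteq> 0)"
  have ex: "\<exists>i. i < d \<and> c i \<noteq> 0" using \<open>\<not> (\<forall>i<d. c i = 0)\<close> by auto
  have bnd: "\<forall>y. y < d \<and> c y \<noteq> 0 \<longrightarrow> y \<le> d" by auto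
  have j: "j < d" "c j \<noteq> 0" using GreatestI_ex_nat[OF ex, of d] bnd unfolding j_def by auto
  have above: "\<And>i. j < i \<Longrightarrow> i < d \<Longrightarrow> c i = 0"
    using Greatest_le_nat[of "\<lambda>i. i < d \<and> c i \<noteq> 0" _ d] unfolding j_def by force
  have "evf d t c = evf (Suc j) t c"
  proof -
    have "evf d t c = (\<Sum>i\<in>{..<Suc j}. to_ac (c i) * t ^ i)" unfolding evf_def
      by (rule sum.mono_neutral_right) (use j above in auto)
    thus ?thesis unfolding evf_def .
  qed
  hence "evf j t c + to_ac (c j) * t ^ j = 0" using z evf_Suc by metis
  hence e: "to_ac (c j) * t ^ j = - evf j t c" by (simp add: eq_neg_iff_add_eq_0 add.commute)
  have cj: "to_ac (c j) \<noteq> 0" using j(2) by simp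
  have "t ^ j = inverse (to_ac (c j)) * (to_ac (c j) * t ^ j)" using cj by simp
  also have "\<dots> = to_ac (- inverse (c j)) * evf j t c" unfolding e by simp
  finally have "t ^ j = to_ac (- inverse (c j)) * evf j t c" .
  moreover have "evf j t c \<in> spn j t" unfolding spn_def by simp
  ultimately have "t ^ j \<in> spn j t" using spn_smult by metis
  thus False using least j(1) by blast
qed

lemma ff_fermat_iter: "(x::'a::{finite,field}) ^ (card (UNIV::'a set) ^ N) = x"
proof (induction N)
  case (Suc N)
  have "x ^ (card (UNIV::'a set) ^ Suc N) = (x ^ card (UNIV::'a set)) ^ (card (UNIV::'a set) ^ N)"
    by (simp add: power_mult)
  thus ?case using Suc ff_fermat by metis
qed simp

lemma L_char_prime: "Factorial_Ring.prime CHAR('a::{finite,field} alg_closure)"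
  using ff_char_prime[where 'a='a] by simp

lemma frob_evf:
  fixes t :: "'a::{finite,field} alg_closure"
  assumes t: "t ^ (card (UNIV::'a set) ^ N) = t"
  shows "(evf d t c) ^ (card (UNIV::'a set) ^ N) = evf d t c"
proof -
  obtain e where e: "card (UNIV::'a set) = CHAR('a) ^ e" using ff_card_char_power by blast
  let ?Q = "card (UNIV::'a set) ^ N"
  have Q: "?Q = CHAR('a alg_closure) ^ (e * N)" using e by (simp add: power_mult)
  have "(evf d t c) ^ ?Q = (\<Sum>i<d. (to_ac (c i) * t ^ i) ^ ?Q)"
    unfolding evf_def by (rule freshmans_dream_sum') (rule L_char_prime, rule Q)
  also have "\<dots> = evf d t c" unfolding evf_def
  proof (rule sum.cong)
    fix i
    have "(t ^ i) ^ ?Q = (t ^ ?Q) ^ i" by (simp add: power_mult[symmetric] mult.commute)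
    moreover have "to_ac (c i) ^ ?Q = to_ac (c i)" by (metis ff_fermat_iter to_ac_power)
    ultimately show "(to_ac (c i) * t ^ i) ^ ?Q = to_ac (c i) * t ^ i"
      using t by (simp only: power_mult_distrib)
  qed simp
  finally show ?thesis .
qed

lemma of_nat_Q_L: assumes "N \<ge> 1"
  shows "(of_nat (card (UNIV::'a::{finite,field} set) ^ N) :: 'a alg_closure) = 0"
proof -
  obtain e where e: "card (UNIV::'a set) = CHAR('a) ^ e" using ff_card_char_power by blast
  have "e \<noteq> 0" using e ff_card_ge2[where 'a='a] by (cases e) auto
  hence "e * N > 0" using assms by simp
  hence "CHAR('a) dvd CHAR('a) ^ (e * N)" by (simp add: dvd_power)
  moreover have "card (UNIV::'a set) ^ N = CHAR('a) ^ (e * N)" using e by (simp add: power_mult)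
  ultimately have "CHAR('a) dvd card (UNIV::'a set) ^ N" by metis
  hence "CHAR('a alg_closure) dvd card (UNIV::'a set) ^ N" by (simp only: CHAR_alg_closure)
  thus ?thesis by (subst of_nat_eq_0_iff_char_dvd)
qed

lemma card_Y:
  assumes N: "N \<ge> 1"
  shows "card {z::'a::{finite,field} alg_closure. z ^ (card (UNIV::'a set) ^ N) = z} = card (UNIV::'a set) ^ N"
proof -
  let ?Q = "card (UNIV::'a set) ^ N"
  have Q2: "?Q \<ge> 2" using ff_card_ge2[where 'a='a] N
    by (metis le_trans one_le_numeral power_increasing power_one_right)
  define P :: "'a alg_closure poly" where "P = Polynomial.monom 1 ?Q - Polynomial.monom 1 1"
  have polyP: "poly P z = z ^ ?Q - z" for z unfolding P_def by (simp add: poly_monom)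
  have Yeq: "{z::'a alg_closure. z ^ ?Q = z} = {z. poly P z = 0}" by (auto simp: polyP)
  have cQ: "Polynomial.coeff P ?Q = 1" unfolding P_def using Q2 by (simp add: coeff_monom)
  hence P0: "P \<noteq> 0" by auto
  have "Polynomial.degree P \<le> ?Q" unfolding P_def
    by (rule degree_diff_le) (use Q2 in \<open>auto simp: degree_monom_eq\<close>)
  moreover have "Polynomial.degree P \<ge> ?Q" using cQ by (intro le_degree) simp
  ultimately have degP: "Polynomial.degree P = ?Q" by simp
  have le: "card {z. poly P z = 0} \<le> ?Q" using card_poly_roots_bound[OF P0] degP by simp
  obtain A where A: "size A = Polynomial.degree P" "P = smult (Polynomial.lead_coeff P) (\<Prod>x\<in>#A. [:-x, 1:])"
    using alg_closed_imp_factorization[OF P0] by blast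
  have dP: "poly (pderiv P) x = -1" for x
  proof -
    have "pderiv P = Polynomial.monom (of_nat ?Q) (?Q - 1) - Polynomial.monom 1 0"
      unfolding P_def by (simp add: pderiv_diff pderiv_monom)
    thus ?thesis using of_nat_Q_L[OF N, where 'a='a] by (simp add: poly_monom)
  qed
  have cnt: "count A x \<le> 1" for x
  proof (rule ccontr)
    assume "\<not> count A x \<le> 1"
    hence "x \<in># A" by (metis count_eq_zero_iff le_zero_eq not_le_imp_less less_imp_le)
    then obtain B where B: "A = add_mset x B" by (metis multi_member_split)
    have "count B x \<noteq> 0" using \<open>\<not> count A x \<le> 1\<close> B by auto
    hence "x \<in># B" by (simp add: count_eq_zero_iff)
    then obtain C where C: "B = add_mset x C" by (metis multi_member_split)
    define a where "a = [:-x, 1:]"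
    define R where "R = (\<Prod>y\<in>#C. [:-y, 1:])"
    have "(\<Prod>y\<in>#A. [:-y, 1:]) = a * (a * R)" unfolding B C a_def R_def by simp
    hence e1: "P = smult (Polynomial.lead_coeff P) (a * (a * R))" using A(2) by (rule trans[rotated, OF arg_cong[where f="smult (Polynomial.lead_coeff P)"]])
    have "pderiv P = pderiv (smult (Polynomial.lead_coeff P) (a * (a * R)))"
      using e1 by (rule arg_cong)
    also have "\<dots> = smult (Polynomial.lead_coeff P) (pderiv (a * (a * R)))" by (rule pderiv_smult)
    also have "\<dots> = smult (Polynomial.lead_coeff P) (a * pderiv (a * R) + (a * R) * pderiv a)"
      by (simp only: pderiv_mult)
    finally have "pderiv P = smult (Polynomial.lead_coeff P) (a * pderiv (a * R) + (a * R) * pderiv a)" .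
    moreover have "poly a x = 0" unfolding a_def by simp
    ultimately have "poly (pderiv P) x = 0" by simp
    thus False using dP[of x] by simp
  qed
  have "size A = (\<Sum>x\<in>set_mset A. count A x)" by (rule size_multiset_overloaded_eq)
  also have "\<dots> = (\<Sum>x\<in>set_mset A. 1)"
  proof (rule sum.cong[OF refl])
    fix x assume "x \<in> set_mset A"
    hence "count A x > 0" by simp
    with cnt[of x] show "count A x = 1" by linarith
  qed
  finally have sz: "card (set_mset A) = ?Q" using A(1) degP by simp
  have "set_mset A \<subseteq> {z. poly P z = 0}"
  proof
    fix x assume "x \<in> set_mset A"
    then obtain B where B: "A = add_mset x B" by (metis multi_member_split)
    have "poly (\<Prod>y\<in>#A. [:-y, 1:]) x = poly [:-x, 1:] x * poly (\<Prod>y\<in>#B. [:-y, 1:]) x"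
      unfolding B by (simp only: image_mset_add_mset prod_mset.add_mset poly_mult)
    also have "poly [:-x, 1:] x = 0" by simp
    finally have "poly (\<Prod>y\<in>#A. [:-y, 1:]) x = 0" by simp
    moreover have "poly P x = poly (smult (Polynomial.lead_coeff P) (\<Prod>y\<in>#A. [:-y, 1:])) x"
      using A(2) by (rule arg_cong[where f="\<lambda>p. poly p x"])
    ultimately have "poly P x = 0" by (simp only: poly_smult mult_zero_right)
    thus "x \<in> {z. poly P z = 0}" by simp
  qed
  hence ge: "card (set_mset A) \<le> card {z. poly P z = 0}"
    by (rule card_mono[OF poly_roots_finite[OF P0]])
  have "card {z. poly P z = 0} = ?Q" using le ge sz by linarith
  thus ?thesis unfolding Yeq .
qed

lemma fin_mult_perm:
  fixes S :: "'b::field set"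
  assumes fin: "finite S" and cl: "\<And>a b. a \<in> S \<Longrightarrow> b \<in> S \<Longrightarrow> a * b \<in> S"
    and z: "z \<in> S" "z \<noteq> 0"
  shows "(\<lambda>y. z * y) ` (S - {0}) = S - {0}" "inj_on (\<lambda>y. z * y) (S - {0})"
proof -
  show inj: "inj_on (\<lambda>y. z * y) (S - {0})" using z(2) by (auto intro: inj_onI)
  have sub: "(\<lambda>y. z * y) ` (S - {0}) \<subseteq> S - {0}" using cl z by auto
  have "card ((\<lambda>y. z * y) ` (S - {0})) = card (S - {0})" using card_image[OF inj] .
  thus "(\<lambda>y. z * y) ` (S - {0}) = S - {0}" using card_subset_eq[OF _ sub] fin by simp
qed

lemma fin_mult_fermat:
  fixes S :: "'b::field set"
  assumes fin: "finite S" and cl: "\<And>a b. a \<in> S \<Longrightarrow> b \<in> S \<Longrightarrow> a * b \<in> S"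
    and z: "z \<in> S" and S0: "0 \<in> S"
  shows "z ^ card S = z"
proof (cases "z = 0")
  case True thus ?thesis using S0 fin by (metis card_0_eq empty_iff power_0_left)
next
  case False
  note pm = fin_mult_perm[OF fin cl z False]
  have "(\<Prod>y\<in>S - {0}. z * y) = (\<Prod>y\<in>(\<lambda>y. z * y) ` (S - {0}). y)"
    by (rule prod.reindex[OF pm(2), symmetric, unfolded comp_def])
  also have "\<dots> = \<Prod>(S - {0})" using pm(1) by simp
  finally have e: "z ^ card (S - {0}) * \<Prod>(S - {0}) = \<Prod>(S - {0})"
    by (simp add: prod.distrib)
  have "\<Prod>(S - {0}) \<noteq> 0" using fin by (simp add: prod_zero_iff)
  hence "z ^ card (S - {0}) = 1" using e by simp
  moreover have "card S = Suc (card (S - {0}))" using fin S0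
    by (metis card_Suc_Diff1)
  ultimately show ?thesis by simp
qed

lemma fin_mult_inverse:
  fixes S :: "'b::field set"
  assumes fin: "finite S" and cl: "\<And>a b. a \<in> S \<Longrightarrow> b \<in> S \<Longrightarrow> a * b \<in> S"
    and z: "z \<in> S" "z \<noteq> 0" and S1: "1 \<in> S"
  shows "\<exists>w\<in>S. z * w = 1"
proof -
  have "1 \<in> (\<lambda>y. z * y) ` (S - {0})" using fin_mult_perm(1)[OF fin cl z] S1 by simp
  thus ?thesis by auto
qed

lemma geom_lt: assumes "(q::nat) \<ge> 2" "N \<ge> 1" shows "(\<Sum>d\<in>{1..<N}. q ^ d) < q ^ N"
  using assms(2)
proof (induction N rule: dec_induct)
  case base thus ?case using assms by simp
next
  case (step N)
  have "(\<Sum>d\<in>{1..<Suc N}. q ^ d) = (\<Sum>d\<in>{1..<N}. q ^ d) + q ^ N"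
    using step(1) by (simp add: sum.atLeastLessThan_Suc)
  also have "\<dots> < q ^ N + q ^ N" using step by simp
  also have "\<dots> \<le> q ^ Suc N"
  proof -
    have "2 * q ^ N \<le> q * q ^ N" by (rule mult_le_mono1[OF assms(1)])
    thus ?thesis by (simp only: mult_2 power_Suc)
  qed
  finally show ?case .
qed

definition dg :: "'a::{finite,field} alg_closure \<Rightarrow> nat" where
  "dg t = (LEAST d. t ^ d \<in> spn d t)"

lemma spn0: "spn 0 t = {0}" unfolding spn_def evf_def by auto

lemma card_spn:
  assumes least: "\<And>j. j < d \<Longrightarrow> t ^ j \<notin> spn j t"
  shows "card (spn d (t::'a::{finite,field} alg_closure)) = card (UNIV::'a set) ^ d"
proof -
  let ?P = "{..<d} \<rightarrow>\<^sub>E (UNIV::'a set)"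
  have eq: "spn d t = evf d t ` ?P"
  proof
    show "spn d t \<subseteq> evf d t ` ?P"
    proof
      fix z assume "z \<in> spn d t"
      then obtain c where c: "z = evf d t c" unfolding spn_def by auto
      have "evf d t c = evf d t (restrict c {..<d})" by (rule evf_cong) auto
      moreover have "restrict c {..<d} \<in> ?P" by auto
      ultimately show "z \<in> evf d t ` ?P" using c by blast
    qed
  qed (auto simp: spn_def)
  have inj: "inj_on (evf d t) ?P"
  proof (rule inj_onI)
    fix c c' assume c: "c \<in> ?P" "c' \<in> ?P" and e: "evf d t c = evf d t c'"
    have "evf d t (\<lambda>i. c i - c' i) = 0" using e evf_diff[of d t c c'] by simp
    from evf_indep[OF least this] have z: "\<forall>i<d. c i - c' i = 0" .
    show "c = c'"
    proof
      fix i show "c i = c' i"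
      proof (cases "i < d")
        case True thus ?thesis using z by simp
      next
        case False thus ?thesis using c by (simp add: PiE_def extensional_def)
      qed
    qed
  qed
  have "card (spn d t) = card ?P" unfolding eq using card_image[OF inj] .
  also have "\<dots> = card (UNIV::'a set) ^ d" by (simp add: card_PiE)
  finally show ?thesis .
qed

lemma dg_props:
  fixes t :: "'a::{finite,field} alg_closure"
  assumes N: "N \<ge> 1" and t: "t ^ (card (UNIV::'a set) ^ N) = t"
  shows "t ^ dg t \<in> spn (dg t) t" "\<And>j. j < dg t \<Longrightarrow> t ^ j \<notin> spn j t" "dg t \<ge> 1"
    "dg t \<le> N" "dg t < N \<Longrightarrow> t ^ (card (UNIV::'a set) ^ dg t) = t"
proof -
  let ?q = "card (UNIV::'a set)"
  have q2: "?q \<ge> 2" by (rule ff_card_ge2)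
  have Q2: "?q ^ N \<ge> 2" using q2 N
    by (metis le_trans one_le_numeral power_increasing power_one_right)
  have ex: "t ^ (?q ^ N) \<in> spn (?q ^ N) t" using t spn_pow[of 1 "?q ^ N" t] Q2 by simp
  show td: "t ^ dg t \<in> spn (dg t) t" unfolding dg_def by (rule LeastI[of _ "?q ^ N"], rule ex)
  show least: "\<And>j. j < dg t \<Longrightarrow> t ^ j \<notin> spn j t" unfolding dg_def by (rule not_less_Least)
  show d1: "dg t \<ge> 1"
  proof (rule ccontr)
    assume "\<not> dg t \<ge> 1" hence "dg t = 0" by simp
    thus False using td spn0[of t] by simp
  qed
  let ?S = "spn (dg t) t"
  have cardS: "card ?S = ?q ^ dg t" by (rule card_spn[OF least])
  have fin: "finite ?S" using cardS q2 by (metis card.infinite gr0I not_numeral_le_zero power_eq_0_iff)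
  have cl: "\<And>a b. a \<in> ?S \<Longrightarrow> b \<in> ?S \<Longrightarrow> a * b \<in> ?S" using spn_mult[OF td] by blast
  have SY: "?S \<subseteq> {z. z ^ (?q ^ N) = z}" using frob_evf[OF t] unfolding spn_def by auto
  have cY: "card {z::'a alg_closure. z ^ (?q ^ N) = z} = ?q ^ N" by (rule card_Y[OF N])
  have finY: "finite {z::'a alg_closure. z ^ (?q ^ N) = z}" using cY Q2
    by (metis card.infinite not_numeral_le_zero)
  have "?q ^ dg t \<le> ?q ^ N" using card_mono[OF finY SY] cardS cY by simp
  thus "dg t \<le> N" using q2 by (simp add: power_le_imp_le_exp)
  have tS: "t \<in> ?S"
  proof -
    have "1 \<in> ?S" using spn_pow[of 0 "dg t" t] d1 by simp
    from spn_mult_t[OF td this] show ?thesis by simp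
  qed
  show "t ^ (?q ^ dg t) = t" if "dg t < N"
    using fin_mult_fermat[OF fin cl tS spn_zero] cardS by simp
qed

lemma exists_good:
  assumes N: "N \<ge> 1"
  shows "\<exists>t::'a::{finite,field} alg_closure. dg t = N \<and> t ^ (card (UNIV::'a set) ^ N) = t"
proof (rule ccontr)
  assume no: "\<not> ?thesis"
  let ?q = "card (UNIV::'a set)"
  let ?Y = "{z::'a alg_closure. z ^ (?q ^ N) = z}"
  let ?Z = "\<lambda>d. {z::'a alg_closure. z ^ (?q ^ d) = z}"
  have q2: "?q \<ge> 2" by (rule ff_card_ge2)
  have sub: "?Y \<subseteq> (\<Union>d\<in>{1..<N}. ?Z d)"
  proof
    fix t assume "t \<in> ?Y"
    hence t: "t ^ (?q ^ N) = t" by simp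
    note p = dg_props[OF N t]
    have "dg t \<noteq> N" using no t by blast
    hence "dg t < N" using p(4) by simp
    thus "t \<in> (\<Union>d\<in>{1..<N}. ?Z d)" using p(3) p(5) by auto
  qed
  have cZ: "d \<in> {1..<N} \<Longrightarrow> card (?Z d) = ?q ^ d" for d using card_Y[of d] by auto
  have finZ: "d \<in> {1..<N} \<Longrightarrow> finite (?Z d)" for d using cZ[of d] q2
    by (metis card.infinite gr0I not_numeral_le_zero power_eq_0_iff)
  have "card ?Y \<le> card (\<Union>d\<in>{1..<N}. ?Z d)"
    by (rule card_mono[OF _ sub]) (use finZ in auto)
  also have "\<dots> \<le> (\<Sum>d\<in>{1..<N}. card (?Z d))" by (rule card_UN_le) simp
  also have "\<dots> = (\<Sum>d\<in>{1..<N}. ?q ^ d)" using cZ by simp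
  also have "\<dots> < ?q ^ N" by (rule geom_lt[OF q2 N])
  finally show False using card_Y[OF N, where 'a='a] by simp
qed

lemma (in vec_space) mult_in_span:
  assumes A: "A \<in> carrier_mat n nc" and v: "v \<in> carrier_vec nc"
  shows "A *\<^sub>v v \<in> span (set (cols A))"
proof -
  have cd: "set (cols A) \<subseteq> carrier_vec n" using A cols_dim by blast
  have "lincomb_list (\<lambda>i. v $ i) (cols A) = mat_of_cols n (cols A) *\<^sub>v vec (length (cols A)) (\<lambda>i. v $ i)"
    by (rule lincomb_list_as_mat_mult) (use cd in auto)
  also have "mat_of_cols n (cols A) = A" using A mat_of_cols_cols[of A] by simp
  also have "vec (length (cols A)) (\<lambda>i. v $ i) = v" using A v by (intro eq_vecI) auto
  finally have e: "A *\<^sub>v v = lincomb_list (\<lambda>i. v $ i) (cols A)" by simp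
  have "A *\<^sub>v v \<in> span_list (cols A)" unfolding e span_list_def by auto
  thus ?thesis using span_list_as_span[OF cd] by simp
qed

lemma (in vec_space) rank_mult_le:
  assumes A: "A \<in> carrier_mat n nc" and B: "B \<in> carrier_mat nc k"
  shows "rank (A * B) \<le> rank A"
proof -
  let ?S = "set (cols A)" and ?T = "set (cols (A * B))"
  have AB: "A * B \<in> carrier_mat n k" using A B by simp
  have Sc: "?S \<subseteq> carrier_vec n" using A cols_dim by blast
  have Tsub: "?T \<subseteq> span ?S"
  proof
    fix x assume "x \<in> ?T"
    then obtain j where j: "j < k" "x = col (A * B) j" using AB
      by (metis carrier_matD(2) cols_length cols_nth in_set_conv_nth)
    have "x = A *\<^sub>v col B j" by (simp only: j(2) col_mult2[OF A B j(1)])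
    thus "x \<in> span ?S" using mult_in_span[OF A] B j by simp
  qed
  have vs: "vectorspace class_ring (vs (span ?S))" using span_is_subspace[THEN subspace_is_vs, of ?S] Sc by auto
  have sm: "submodule class_ring (span ?S) V" using Sc by (simp add: span_is_submodule)
  have sub: "VectorSpace.subspace class_ring (span ?T) (vs (span ?S))"
    using vectorspace.span_is_subspace[OF vs, of ?T, unfolded span_li_not_depend(1)[OF Tsub sm]]
      Tsub by auto
  have fin: "vectorspace.fin_dim class_ring (vs (span ?S))"
      "vectorspace.fin_dim class_ring (vs (span ?S)\<lparr>carrier := span ?T\<rparr>)"
    using fin_dim_span_cols A AB by auto
  show ?thesis unfolding rank_def using vectorspace.subspace_dim[OF vs sub fin(1) fin(2)] by simp
qed

lemma (in vec_space) left_inv_rank: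
  assumes A: "A \<in> carrier_mat n nc" and L: "L \<in> carrier_mat nc n" and LA: "L * A = 1\<^sub>m nc"
  shows "rank A = nc"
proof -
  have dist: "distinct (cols A)"
  proof (rule ccontr)
    assume "\<not> distinct (cols A)"
    then obtain i j where ij: "i \<noteq> j" "cols A ! i = cols A ! j" "i < length (cols A)" "j < length (cols A)"
      using distinct_conv_nth by blast
    hence c: "col A i = col A j" "i < nc" "j < nc" using A by auto
    have "col (L * A) i = col (L * A) j" using c A L by simp
    hence "col (1\<^sub>m nc) i = (col (1\<^sub>m nc) j :: 'a vec)" using LA by simp
    hence "(col (1\<^sub>m nc) i :: 'a vec) $ i = col (1\<^sub>m nc) j $ i" by simp
    thus False using c ij(1) by simp
  qed
  have "lin_indpt (set (cols A))"
  proof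
    assume "lin_dep (set (cols A))"
    then obtain v where v: "v \<in> carrier_vec nc" "v \<noteq> 0\<^sub>v nc" "A *\<^sub>v v = 0\<^sub>v n"
      using lin_depE[OF A _ dist] by blast
    have "v = (L * A) *\<^sub>v v" using LA v by simp
    also have "\<dots> = L *\<^sub>v (A *\<^sub>v v)" using A L v by (simp add: assoc_mult_mat_vec)
    also have "\<dots> = 0\<^sub>v nc" using v L by (intro eq_vecI) auto
    finally show False using v by simp
  qed
  thus ?thesis using lin_indpt_full_rank[OF A dist] by simp
qed

lemma rank_ge_LR:
  fixes D :: "'a::field mat"
  assumes D: "D \<in> carrier_mat m n" and R: "R \<in> carrier_mat n r" and L: "L \<in> carrier_mat r m"
    and LDR: "L * (D * R) = 1\<^sub>m r"
  shows "r \<le> mat_rk D"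
proof -
  have DR: "D * R \<in> carrier_mat m r" using D R by simp
  have "vec_space.rank m (D * R) = r" by (rule vec_space.left_inv_rank[OF DR L LDR])
  moreover have "vec_space.rank m (D * R) \<le> vec_space.rank m D" by (rule vec_space.rank_mult_le[OF D R])
  ultimately show ?thesis unfolding mat_rk_def using D by simp
qed

lemma rank_le_factor:
  fixes A :: "'a::field mat"
  assumes A: "A \<in> carrier_mat m k" and B: "B \<in> carrier_mat k n"
  shows "mat_rk (A * B) \<le> k"
proof -
  have "vec_space.rank m (A * B) \<le> vec_space.rank m A" by (rule vec_space.rank_mult_le[OF A B])
  also have "\<dots> \<le> k" by (rule vec_space.rank_le_nc[OF A])
  finally show ?thesis unfolding mat_rk_def using A B by simp
qed

definition coord :: "nat \<Rightarrow> 'a::{finite,field} alg_closure \<Rightarrow> 'a alg_closure \<Rightarrow> nat \<Rightarrow> 'a" where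
  "coord N t z = (SOME c. evf N t c = z)"

locale goodt =
  fixes N :: nat and t :: "'a::{finite,field} alg_closure"
  assumes N1: "N \<ge> 1" and dgN: "dg t = N" and tQ: "t ^ (card (UNIV::'a set) ^ N) = t"
begin

abbreviation "S \<equiv> spn N t"

lemma td: "t ^ N \<in> S" using dg_props(1)[OF N1 tQ] dgN by simp
lemma least: "j < N \<Longrightarrow> t ^ j \<notin> spn j t" using dg_props(2)[OF N1 tQ] dgN by simp

lemma cardS: "card S = card (UNIV::'a set) ^ N" by (rule card_spn[OF least])

lemma finS: "finite S" using cardS ff_card_ge2[where 'a='a]
  by (metis card.infinite gr0I not_numeral_le_zero power_eq_0_iff)

lemma indep: "evf N t c = evf N t c' \<Longrightarrow> i < N \<Longrightarrow> c i = c' i"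
proof -
  assume "evf N t c = evf N t c'" "i < N"
  hence "evf N t (\<lambda>i. c i - c' i) = 0" using evf_diff[of N t c c'] by simp
  from evf_indep[OF least this] \<open>i < N\<close> show "c i = c' i" by simp
qed

lemma coord: "z \<in> S \<Longrightarrow> evf N t (coord N t z) = z"
proof -
  assume "z \<in> S"
  then obtain c where "evf N t c = z" unfolding spn_def by auto
  thus ?thesis unfolding coord_def by (rule someI[where P="\<lambda>c. evf N t c = z"])
qed

lemma coord_unique: "evf N t c = z \<Longrightarrow> i < N \<Longrightarrow> coord N t z i = c i"
proof -
  assume e: "evf N t c = z" "i < N"
  hence "z \<in> S" unfolding spn_def by auto
  hence "evf N t (coord N t z) = evf N t c" using coord e by simp
  thus ?thesis using indep e(2) by blast
qed

lemma multS: "z \<in> S \<Longrightarrow> w \<in> S \<Longrightarrow> z * w \<in> S" using spn_mult[OF td] by blast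
lemma oneS: "1 \<in> S" using spn_pow[of 0 N t] N1 by simp
lemma powS: "j < N \<Longrightarrow> t ^ j \<in> S" by (rule spn_pow)
lemma invS: "z \<in> S \<Longrightarrow> z \<noteq> 0 \<Longrightarrow> \<exists>w\<in>S. z * w = 1"
  by (rule fin_mult_inverse[OF finS multS _ _ oneS])

definition G :: "'a alg_closure \<Rightarrow> 'a mat" where
  "G z = mat N N (\<lambda>(i,j). coord N t (z * t ^ j) i)"

lemma G_carrier: "G z \<in> carrier_mat N N" unfolding G_def by simp

lemma G_diff: assumes z: "z \<in> S" and w: "w \<in> S" shows "G z - G w = G (z - w)"
proof (rule eq_matI)
  fix i j assume ij: "i < dim_row (G (z - w))" "j < dim_col (G (z - w))"
  hence ij': "i < N" "j < N" unfolding G_def by auto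
  have zS: "z * t ^ j \<in> S" "w * t ^ j \<in> S" using multS z w powS ij' by auto
  have "evf N t (\<lambda>i. coord N t (z * t ^ j) i - coord N t (w * t ^ j) i) = (z - w) * t ^ j"
    using evf_diff[of N t "coord N t (z * t ^ j)" "coord N t (w * t ^ j)", symmetric] coord[OF zS(1)] coord[OF zS(2)]
    by (simp add: left_diff_distrib)
  hence "coord N t ((z - w) * t ^ j) i = coord N t (z * t ^ j) i - coord N t (w * t ^ j) i"
    using coord_unique ij' by blast
  thus "(G z - G w) $$ (i, j) = G (z - w) $$ (i, j)" using ij' by (simp add: G_def)
qed (auto simp: G_def)

lemma G_mult: assumes z: "z \<in> S" and w: "w \<in> S" shows "G z * G w = G (z * w)"
proof (rule eq_matI)
  fix i j assume ij: "i < dim_row (G (z * w))" "j < dim_col (G (z * w))"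
  hence ij': "i < N" "j < N" unfolding G_def by auto
  define b where "b = coord N t (w * t ^ j)"
  define a where "a = (\<lambda>l. coord N t (z * t ^ l))"
  have wS: "w * t ^ j \<in> S" using multS w powS ij' by auto
  have zS: "l < N \<Longrightarrow> z * t ^ l \<in> S" for l using multS z powS by auto
  have "evf N t (\<lambda>i. \<Sum>l<N. a l i * b l) = (\<Sum>i<N. \<Sum>l<N. to_ac (b l) * (to_ac (a l i) * t ^ i))"
    unfolding evf_def
  proof (rule sum.cong[OF refl])
    fix i
    have "to_ac (\<Sum>l<N. a l i * b l) * t ^ i = (\<Sum>l<N. to_ac (a l i) * to_ac (b l) * t ^ i)"
      by (simp add: to_ac_sum sum_distrib_right)
    also have "\<dots> = (\<Sum>l<N. to_ac (b l) * (to_ac (a l i) * t ^ i))"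
      by (rule sum.cong[OF refl]) (simp add: mult_ac)
    finally show "to_ac (\<Sum>l<N. a l i * b l) * t ^ i = (\<Sum>l<N. to_ac (b l) * (to_ac (a l i) * t ^ i))" .
  qed
  also have "\<dots> = (\<Sum>l<N. to_ac (b l) * (\<Sum>i<N. to_ac (a l i) * t ^ i))"
    by (subst sum.swap) (simp add: sum_distrib_left)
  also have "\<dots> = (\<Sum>l<N. to_ac (b l) * (z * t ^ l))"
  proof (rule sum.cong[OF refl])
    fix l assume "l \<in> {..<N}"
    hence "evf N t (a l) = z * t ^ l" using coord zS unfolding a_def by simp
    thus "to_ac (b l) * (\<Sum>i<N. to_ac (a l i) * t ^ i) = to_ac (b l) * (z * t ^ l)"
      unfolding evf_def by simp
  qed
  also have "\<dots> = z * evf N t b" unfolding evf_def by (simp add: sum_distrib_left mult_ac)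
  also have "\<dots> = z * (w * t ^ j)" unfolding b_def using coord wS by simp
  finally have "evf N t (\<lambda>i. \<Sum>l<N. a l i * b l) = z * w * t ^ j" by (simp only: mult.assoc)
  from coord_unique[OF this ij'(1)] have "coord N t (z * w * t ^ j) i = (\<Sum>l<N. a l i * b l)" .
  moreover have "(G z * G w) $$ (i, j) = (\<Sum>l<N. a l i * b l)"
    using ij' G_carrier[of z] G_carrier[of w]
    by (simp add: G_def a_def b_def scalar_prod_def lessThan_atLeast0)
  ultimately show "(G z * G w) $$ (i, j) = G (z * w) $$ (i, j)" using ij' by (simp add: G_def)
qed (auto simp: G_def)

lemma G_one: "G 1 = 1\<^sub>m N"
proof (rule eq_matI)
  fix i j assume ij: "i < dim_row (1\<^sub>m N :: 'a mat)" "j < dim_col (1\<^sub>m N :: 'a mat)"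
  hence ij': "i < N" "j < N" by auto
  have "coord N t (t ^ j) i = (if i = j then 1 else 0)"
    using coord_unique[OF evf_unit[OF ij'(2)] ij'(1)] by simp
  thus "G 1 $$ (i, j) = 1\<^sub>m N $$ (i, j)" using ij' by (simp add: G_def)
qed (auto simp: G_def)

lemma G_inj: assumes z: "z \<in> S" and w: "w \<in> S" and e: "G z = G w" shows "z = w"
proof -
  have "\<And>i. i < N \<Longrightarrow> coord N t z i = coord N t w i"
  proof -
    fix i assume i: "i < N"
    have "G z $$ (i, 0) = G w $$ (i, 0)" using e by simp
    thus "coord N t z i = coord N t w i" using i N1 by (simp add: G_def)
  qed
  hence "evf N t (coord N t z) = evf N t (coord N t w)" by (rule evf_cong)
  thus ?thesis using coord z w by simp
qed

end

declare minus_carrier_mat[simp] uminus_carrier_mat[simp]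

definition sel :: "nat \<Rightarrow> nat \<Rightarrow> 'a::{zero,one} mat" where
  "sel r c = mat r c (\<lambda>(i,j). if i = j then 1 else 0)"

lemma sel_carrier[simp]: "sel r c \<in> carrier_mat r c" unfolding sel_def by simp

lemma sel_mult: assumes "r \<le> s" shows "sel r s * sel s r = (1\<^sub>m r :: 'a::semiring_1 mat)"
proof (rule eq_matI)
  fix i j assume ij: "i < dim_row (1\<^sub>m r :: 'a mat)" "j < dim_col (1\<^sub>m r :: 'a mat)"
  hence ij': "i < r" "j < r" by auto
  have "(sel r s * sel s r) $$ (i, j) = (\<Sum>l\<in>{0..<s}. (if i = l then 1 else 0) * (if l = j then 1 else (0::'a)))"
    using ij' assms by (simp add: sel_def scalar_prod_def)
  also have "\<dots> = (\<Sum>l\<in>{0..<s}. if l = i then (if i = j then 1 else 0) else 0)"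
    by (rule sum.cong) auto
  also have "\<dots> = (if i = j then 1 else 0)" using ij' assms by (simp add: sum.delta)
  also have "\<dots> = 1\<^sub>m r $$ (i, j)" using ij' by simp
  finally show "(sel r s * sel s r :: 'a mat) $$ (i, j) = 1\<^sub>m r $$ (i, j)" .
qed (auto simp: sel_def)

lemma four_block_minus:
  assumes "A \<in> carrier_mat nr1 nc1" "B \<in> carrier_mat nr1 nc2" "C \<in> carrier_mat nr2 nc1" "D \<in> carrier_mat nr2 nc2"
    "A' \<in> carrier_mat nr1 nc1" "B' \<in> carrier_mat nr1 nc2" "C' \<in> carrier_mat nr2 nc1" "D' \<in> carrier_mat nr2 nc2"
  shows "four_block_mat A B C D - four_block_mat A' B' C' D' = four_block_mat (A - A') (B - B') (C - C') (D - D')"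
  by (rule eq_matI) (use assms in auto)

locale codeloc = goodt N t for N and t :: "'a::{finite,field} alg_closure" +
  fixes k M :: nat
  assumes k1: "1 \<le> k" and kN: "k \<le> N" and NM: "N \<le> M"
begin

definition Qz :: "'a alg_closure \<Rightarrow> 'a mat" where "Qz z = sel k N * G z"
definition Pz :: "'a alg_closure \<Rightarrow> 'a mat" where "Pz z = sel M N * (G z * sel N k)"
definition Xc :: "'a alg_closure \<Rightarrow> 'a mat" where "Xc z = four_block_mat (Qz z) (1\<^sub>m k) (Pz z * Qz z) (Pz z)"

lemma Qz_c[simp]: "Qz z \<in> carrier_mat k N" unfolding Qz_def by (rule mult_carrier_mat[OF sel_carrier G_carrier])
lemma Pz_c[simp]: "Pz z \<in> carrier_mat M k" unfolding Pz_def
  by (rule mult_carrier_mat[OF sel_carrier mult_carrier_mat[OF G_carrier sel_carrier]])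
lemma Qz_dim[simp]: "dim_row (Qz z) = k" "dim_col (Qz z) = N" using Qz_c[of z] unfolding carrier_mat_def by auto
lemma Pz_dim[simp]: "dim_row (Pz z) = M" "dim_col (Pz z) = k" using Pz_c[of z] unfolding carrier_mat_def by auto
lemma PQ_c[simp]: "Pz z * Qz w \<in> carrier_mat M N" by (rule mult_carrier_mat[OF Pz_c Qz_c])

lemma X_c: "Xc z \<in> carrier_mat (k + M) (N + k)" unfolding Xc_def by simp

lemma X_rank_le: "mat_rk (Xc z) \<le> k"
proof -
  define A where "A = four_block_mat (1\<^sub>m k) (0\<^sub>m k 0) (Pz z) (0\<^sub>m M 0 :: 'a mat)"
  define B where "B = four_block_mat (Qz z) (1\<^sub>m k) (0\<^sub>m 0 N) (0\<^sub>m 0 k :: 'a mat)"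
  have Ac: "A \<in> carrier_mat (k + M) k" unfolding A_def using four_block_carrier_mat[of "1\<^sub>m k" k k "0\<^sub>m M 0" M 0] by simp
  have Bc: "B \<in> carrier_mat k (N + k)" unfolding B_def using four_block_carrier_mat[of "Qz z" k N "0\<^sub>m 0 k" 0 k] by simp
  have "A * B = four_block_mat (1\<^sub>m k * Qz z + 0\<^sub>m k 0 * 0\<^sub>m 0 N) (1\<^sub>m k * 1\<^sub>m k + 0\<^sub>m k 0 * 0\<^sub>m 0 k)
      (Pz z * Qz z + 0\<^sub>m M 0 * 0\<^sub>m 0 N) (Pz z * 1\<^sub>m k + 0\<^sub>m M 0 * 0\<^sub>m 0 k)"
    unfolding A_def B_def by (rule mult_four_block_mat) auto
  also have "\<dots> = Xc z" unfolding Xc_def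
    using Qz_c[of z] Pz_c[of z] by (simp add: left_mult_one_mat right_mult_one_mat)
  finally have "Xc z = A * B" ..
  thus ?thesis using rank_le_factor[OF Ac Bc] by simp
qed

lemma X_rank_ge:
  assumes z: "z \<in> S" and w: "w \<in> S" and zw: "z \<noteq> w"
  shows "k + k \<le> mat_rk (Xc z - Xc w)"
proof -
  have dS: "z - w \<in> S" using spn_diff z w .
  obtain u where u: "u \<in> S" "(z - w) * u = 1" using invS[OF dS] zw by auto
  define Gd where "Gd = G (z - w)"
  define Gu where "Gu = G u"
  have Gdc: "Gd \<in> carrier_mat N N" and Guc: "Gu \<in> carrier_mat N N" unfolding Gd_def Gu_def using G_carrier by auto
  have GdGu: "Gd * Gu = 1\<^sub>m N" unfolding Gd_def Gu_def using G_mult[OF dS u(1)] u(2) G_one by simp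
  have GuGd: "Gu * Gd = 1\<^sub>m N" unfolding Gd_def Gu_def using G_mult[OF u(1) dS] u(2) G_one by (simp add: mult.commute)
  have Gdiff: "G z - G w = Gd" unfolding Gd_def by (rule G_diff[OF z w])
  define dQ where "dQ = Qz z - Qz w"
  define dP where "dP = Pz z - Pz w"
  define Ed where "Ed = Pz z * Qz z - Pz w * Qz w"
  have dQc: "dQ \<in> carrier_mat k N" and dPc: "dP \<in> carrier_mat M k" and Edc: "Ed \<in> carrier_mat M N"
    unfolding dQ_def dP_def Ed_def by (auto intro!: minus_carrier_mat mult_carrier_mat[OF Pz_c Qz_c])
  have dQe: "dQ = sel k N * Gd" unfolding dQ_def Qz_def Gdiff[symmetric]
    by (rule mult_minus_distrib_mat[OF sel_carrier G_carrier G_carrier, symmetric])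
  have "G z * sel N k - G w * sel N k = Gd * sel N k" unfolding Gdiff[symmetric]
    by (rule minus_mult_distrib_mat[OF G_carrier G_carrier sel_carrier, symmetric])
  hence dPe: "dP = sel M N * (Gd * sel N k)" unfolding dP_def Pz_def
    by (subst mult_minus_distrib_mat[OF sel_carrier mult_carrier_mat[OF G_carrier sel_carrier] mult_carrier_mat[OF G_carrier sel_carrier], symmetric]) simp
  define W where "W = Gu * sel N k"
  define V where "V = sel k N * Gu * sel N M"
  have Wc: "W \<in> carrier_mat N k" unfolding W_def by (rule mult_carrier_mat[OF Guc sel_carrier])
  have Vc: "V \<in> carrier_mat k M" unfolding V_def
    by (rule mult_carrier_mat[OF mult_carrier_mat[OF sel_carrier Guc] sel_carrier])
  have GSc: "Gd * sel N k \<in> carrier_mat N k" by (rule mult_carrier_mat[OF Gdc sel_carrier])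
  have dQW: "dQ * W = 1\<^sub>m k"
  proof -
    have "dQ * W = sel k N * (Gd * (Gu * sel N k))" unfolding dQe W_def
      by (rule assoc_mult_mat[OF sel_carrier Gdc Wc[unfolded W_def]])
    also have "Gd * (Gu * sel N k) = (Gd * Gu) * sel N k"
      by (rule assoc_mult_mat[OF Gdc Guc sel_carrier, symmetric])
    also have "\<dots> = sel N k" using GdGu by (simp add: left_mult_one_mat[OF sel_carrier])
    also have "(sel k N * sel N k :: 'a mat) = 1\<^sub>m k" by (rule sel_mult[OF kN])
    finally show ?thesis .
  qed
  have VdP: "V * dP = 1\<^sub>m k"
  proof -
    have A1c: "sel k N * Gu \<in> carrier_mat k N" by (rule mult_carrier_mat[OF sel_carrier Guc])
    have SGc: "sel M N * (Gd * sel N k) \<in> carrier_mat M k" by (rule mult_carrier_mat[OF sel_carrier GSc])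
    have "V * dP = (sel k N * Gu) * (sel N M * (sel M N * (Gd * sel N k)))" unfolding V_def dPe
      by (rule assoc_mult_mat[OF A1c sel_carrier SGc])
    also have "sel N M * (sel M N * (Gd * sel N k)) = (sel N M * sel M N) * (Gd * sel N k)"
      by (rule assoc_mult_mat[OF sel_carrier sel_carrier GSc, symmetric])
    also have "\<dots> = Gd * sel N k" by (simp only: sel_mult[OF NM, where 'a='a] left_mult_one_mat[OF GSc])
    also have "(sel k N * Gu) * (Gd * sel N k) = sel k N * (Gu * (Gd * sel N k))"
      by (rule assoc_mult_mat[OF sel_carrier Guc GSc])
    also have "Gu * (Gd * sel N k) = (Gu * Gd) * sel N k"
      by (rule assoc_mult_mat[OF Guc Gdc sel_carrier, symmetric])
    also have "\<dots> = sel N k" using GuGd by (simp add: left_mult_one_mat[OF sel_carrier])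
    also have "(sel k N * sel N k :: 'a mat) = 1\<^sub>m k" by (rule sel_mult[OF kN])
    finally show ?thesis .
  qed
  define D where "D = Xc z - Xc w"
  have De: "D = four_block_mat dQ (0\<^sub>m k k) Ed dP"
    unfolding D_def Xc_def dQ_def dP_def Ed_def
    by (subst four_block_minus) auto
  have Dc: "D \<in> carrier_mat (k + M) (N + k)" unfolding D_def using X_c by auto
  define R where "R = four_block_mat W (0\<^sub>m N k) (0\<^sub>m k k) (1\<^sub>m k :: 'a mat)"
  have Rc: "R \<in> carrier_mat (N + k) (k + k)" unfolding R_def using Wc by auto
  have "D * R = four_block_mat (dQ * W + 0\<^sub>m k k * 0\<^sub>m k k) (dQ * 0\<^sub>m N k + 0\<^sub>m k k * 1\<^sub>m k)
      (Ed * W + dP * 0\<^sub>m k k) (Ed * 0\<^sub>m N k + dP * 1\<^sub>m k)"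
    unfolding De R_def by (rule mult_four_block_mat) (use dQc dPc Edc Wc in auto)
  also have "\<dots> = four_block_mat (1\<^sub>m k) (0\<^sub>m k k) (Ed * W) dP"
    using dQc dPc Edc Wc dQW by (simp add: right_mult_zero_mat left_mult_zero_mat right_mult_one_mat)
  finally have DR: "D * R = four_block_mat (1\<^sub>m k) (0\<^sub>m k k) (Ed * W) dP" .
  define L where "L = four_block_mat (1\<^sub>m k) (0\<^sub>m k M) (- (V * (Ed * W))) V"
  have EWc: "Ed * W \<in> carrier_mat M k" using Edc Wc by auto
  have Lc: "L \<in> carrier_mat (k + k) (k + M)" unfolding L_def using Vc by auto
  have "L * (D * R) = four_block_mat (1\<^sub>m k * 1\<^sub>m k + 0\<^sub>m k M * (Ed * W)) (1\<^sub>m k * 0\<^sub>m k k + 0\<^sub>m k M * dP)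
      (- (V * (Ed * W)) * 1\<^sub>m k + V * (Ed * W)) (- (V * (Ed * W)) * 0\<^sub>m k k + V * dP)"
    unfolding DR L_def by (rule mult_four_block_mat) (use dPc EWc Vc in auto)
  also have "\<dots> = four_block_mat (1\<^sub>m k) (0\<^sub>m k k) (0\<^sub>m k k) (1\<^sub>m k)"
  proof -
    have VEW: "V * (Ed * W) \<in> carrier_mat k k" using Vc EWc by auto
    have e1: "- (V * (Ed * W)) * 1\<^sub>m k = - (V * (Ed * W))" by (rule right_mult_one_mat[OF uminus_carrier_mat[OF VEW]])
    have e2: "- (V * (Ed * W)) + V * (Ed * W) = 0\<^sub>m k k" by (rule uminus_l_inv_mat[OF VEW])
    have e3: "- (V * (Ed * W)) * 0\<^sub>m k k = 0\<^sub>m k k" by (rule right_mult_zero_mat[OF uminus_carrier_mat[OF VEW]])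
    show ?thesis using VEW dPc EWc Vc VdP
      by (simp add: right_mult_zero_mat left_mult_zero_mat right_mult_one_mat e1 e2 e3)
  qed
  also have "\<dots> = 1\<^sub>m (k + k)" by simp
  finally have "L * (D * R) = 1\<^sub>m (k + k)" .
  from rank_ge_LR[OF Dc Rc Lc this] show ?thesis unfolding D_def .
qed

end

theorem corollary2:
  fixes d n m :: nat
  assumes "1 \<le> d" "d \<le> n" "n \<le> m"
    and "odd d \<Longrightarrow> d \<le> n - 1"
  shows "\<exists>(C :: ('a::{finite,field}) mat set) r.
           C \<subseteq> carrier_mat m n \<and> min_rank_dist_ge C d \<and> r \<in> carrier_mat m n \<and>
           card (C \<inter> rank_ball m n ((d - 1) div 2 + 1) r) \<ge> card (UNIV :: 'a set) ^ (n - ((d - 1) div 2 + 1))"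
proof -
  define k where "k = (d - 1) div 2 + 1"
  have k1: "1 \<le> k" unfolding k_def by simp
  have dk: "d \<le> k + k" unfolding k_def using assms(1) by presburger
  have kn: "k + k \<le> n"
  proof (cases "odd d")
    case True
    hence "d \<le> n - 1" using assms(4) by simp
    thus ?thesis unfolding k_def using True assms(1,2) by presburger
  next
    case False
    thus ?thesis unfolding k_def using assms(1,2) by presburger
  qed
  define N where "N = n - k"
  define M where "M = m - k"
  have kN: "k \<le> N" and N1: "1 \<le> N" using kn k1 unfolding N_def by auto
  have NM: "N \<le> M" using assms(3) unfolding N_def M_def by auto
  have mM: "k + M = m" and nN: "N + k = n" using kn assms(3) unfolding N_def M_def by auto
  obtain t :: "'a alg_closure" where t: "dg t = N" "t ^ (card (UNIV::'a set) ^ N) = t"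
    using exists_good[OF N1] by blast
  interpret codeloc N t k M
    by unfold_locales (use N1 t kN NM k1 in auto)
  define C where "C = Xc ` S"
  define r where "r = (0\<^sub>m m n :: 'a mat)"
  have Xc_mn: "Xc z \<in> carrier_mat m n" for z using X_c[of z] mM nN by simp
  have rk0: "mat_rk (0\<^sub>m m n :: 'a mat) = 0" unfolding mat_rk_def using vec_space.rank_0I by simp
  have inj: "inj_on Xc S"
  proof (rule inj_onI, rule ccontr)
    fix z w assume z: "z \<in> S" and w: "w \<in> S" and e: "Xc z = Xc w" and ne: "z \<noteq> w"
    have "k + k \<le> mat_rk (Xc z - Xc w)" by (rule X_rank_ge[OF z w ne])
    moreover have "Xc z - Xc w = 0\<^sub>m m n" using e Xc_mn[of w] by simp
    ultimately show False using rk0 k1 by simp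
  qed
  have "C \<subseteq> carrier_mat m n" unfolding C_def using Xc_mn by auto
  moreover have "min_rank_dist_ge C d"
    unfolding min_rank_dist_ge_def C_def
  proof (intro ballI impI)
    fix c1 c2 assume c1: "c1 \<in> Xc ` S" and c2: "c2 \<in> Xc ` S" and ne: "c1 \<noteq> c2"
    then obtain z w where zw: "z \<in> S" "w \<in> S" "c1 = Xc z" "c2 = Xc w" by auto
    hence "z \<noteq> w" using ne by auto
    hence "k + k \<le> mat_rk (c1 - c2)" using X_rank_ge zw by simp
    thus "d \<le> mat_rk (c1 - c2)" using dk by simp
  qed
  moreover have "r \<in> carrier_mat m n" unfolding r_def by simp
  moreover have "card (C \<inter> rank_ball m n k r) \<ge> card (UNIV :: 'a set) ^ (n - k)"
  proof -
    have sub: "C \<subseteq> rank_ball m n k r"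
    proof
      fix c assume "c \<in> C"
      then obtain z where z: "c = Xc z" unfolding C_def by auto
      have "Xc z - r = Xc z" unfolding r_def using Xc_mn[of z] by (intro eq_matI) auto
      thus "c \<in> rank_ball m n k r" unfolding rank_ball_def using z Xc_mn X_rank_le by simp
    qed
    hence "C \<inter> rank_ball m n k r = C" by auto
    moreover have "card C = card (UNIV :: 'a set) ^ N" unfolding C_def
      using card_image[OF inj] cardS by simp
    ultimately show ?thesis unfolding N_def by simp
  qed
  ultimately show ?thesis unfolding k_def by blast
qed

end
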